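(* Let $d\geq 1$ and $c\geq 0$ be integers. Let $R_{d,c}$ be the set of all two-dimensional decompositions with parameters $b=2$, $d$, $c$ (of any integer $w\in\{0,\dots,2dc\}$), i.e. the set of all $2\times d$ matrices with entries in $\{0,\dots,c\}$ weakly decreasing along rows and down columns. Let $FBT_{d,c+1}$ be the set of finite full binary trees with exactly $c+1$ left fathers (the root included) and exactly $d$ right fathers. Then there is a bijection between $R_{d,c}$ and $FBT_{d,c+1}$.
   Context: Two-dimensional decomposition: given integers $d\geq1$, $b\geq 1$, $c\geq 0$, $w\geq 0$, a two-dimensional decomposition of $w$ with parameters $d,b,c$ is a $b\times d$ matrix $(a_{i,j})$ with all $a_{i,j}\in\{0,\dots,c\}$, weakly decreasing along each row and down each column, with $\sum a_{i,j}=w$. A full binary tree is a finite rooted planar tree in which every vertex has either no children or exactly two children (a left child and a right child). The root is regarded as a left vertex; left children are left vertices and right children are right vertices. A father is a vertex with two children; left (resp. right) fathers are fathers that are left (resp. right) vertices. *)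

theory Defs
  imports Main
begin

text \<open>Two-dimensional decompositions with parameters d, b, c: b x d matrices,
represented as functions on row index i < b and column index j < d
(0-based), extensional (value 0 outside the index range).\<close>

definition two_dim_decomp :: "nat \<Rightarrow> nat \<Rightarrow> nat \<Rightarrow> nat \<Rightarrow> (nat \<Rightarrow> nat \<Rightarrow> nat) \<Rightarrow> bool" where
  "two_dim_decomp d b c w a \<longleftrightarrow>
     (\<forall>i j. \<not> (i < b \<and> j < d) \<longrightarrow> a i j = 0) \<and>
     (\<forall>i<b. \<forall>j<d. a i j \<le> c) \<and>
     (\<forall>i<b. \<forall>j. Suc j < d \<longrightarrow> a i (Suc j) \<le> a i j) \<and>
     (\<forall>i j. Suc i < b \<longrightarrow> j < d \<longrightarrow> a (Suc i) j \<le> a i j) \<and>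
     (\<Sum>i<b. \<Sum>j<d. a i j) = w"

definition R :: "nat \<Rightarrow> nat \<Rightarrow> (nat \<Rightarrow> nat \<Rightarrow> nat) set" where
  "R d c = {a. \<exists>w. two_dim_decomp d 2 c w a}"

datatype fbt = Leaf | Node fbt fbt

text \<open>Number of left fathers / right fathers in a subtree, given whether its root
is a left vertex (True) or a right vertex (False).\<close>
fun left_fathers :: "bool \<Rightarrow> fbt \<Rightarrow> nat" where
  "left_fathers _ Leaf = 0"
| "left_fathers is_left (Node l r) = (if is_left then 1 else 0) + left_fathers True l + left_fathers False r"

fun right_fathers :: "bool \<Rightarrow> fbt \<Rightarrow> nat" where
  "right_fathers _ Leaf = 0"
| "right_fathers is_left (Node l r) = (if is_left then 0 else 1) + right_fathers True l + right_fathers False r"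

text \<open>FBT_{d,k}: full binary trees (root regarded as a left vertex) with exactly
k left fathers and exactly d right fathers.\<close>
definition FBT :: "nat \<Rightarrow> nat \<Rightarrow> fbt set" where
  "FBT d k = {t. left_fathers True t = k \<and> right_fathers True t = d}"

end

theory Submission
  imports Defs
begin


fun walk :: "nat \<Rightarrow> bool list \<Rightarrow> nat option" where
  "walk h [] = Some h"
| "walk h (True # w) = walk (Suc h) w"
| "walk h (False # w) = (if h = 0 then None else walk (h - 1) w)"

lemma walk_append: "walk h (a @ b) = (case walk h a of None \<Rightarrow> None | Some k \<Rightarrow> walk k b)"
  by (induction h a rule: walk.induct) auto

fun enc :: "fbt \<Rightarrow> bool list" where
  "enc Leaf = []"
| "enc (Node l r) = True # enc l @ False # enc r"

lemma walk_enc: "walk h (enc t @ w) = walk h w"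
  by (induction t arbitrary: h w) auto

lemma walk_enc0: "walk 0 (enc t) = Some 0"
  using walk_enc[of 0 t "[]"] by simp

lemma enc_split: "enc a @ False # x = enc b @ False # y \<Longrightarrow> enc a = enc b \<and> x = y"
proof -
  assume H: "enc a @ False # x = enc b @ False # y"
  then obtain us where "(enc a = enc b @ us \<and> us @ False # x = False # y) \<or> (enc a @ us = enc b \<and> False # x = us @ False # y)"
    by (auto simp: append_eq_append_conv2)
  then show ?thesis
  proof
    assume A: "enc a = enc b @ us \<and> us @ False # x = False # y"
    show ?thesis
    proof (cases us)
      case Nil then show ?thesis using A by simp
    next
      case (Cons u us')
      then have "u = False" using A by simp
      then have "walk 0 (enc a) = None" using A Cons walk_enc[of 0 b "False # us'"] by simp
      then show ?thesis using walk_enc0 by simp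
    qed
  next
    assume A: "enc a @ us = enc b \<and> False # x = us @ False # y"
    show ?thesis
    proof (cases us)
      case Nil then show ?thesis using A by simp
    next
      case (Cons u us')
      then have "u = False" using A by simp
      then have "walk 0 (enc b) = None" using A Cons walk_enc[of 0 a "False # us'"] by simp
      then show ?thesis using walk_enc0 by simp
    qed
  qed
qed

lemma enc_inj: "enc a = enc b \<Longrightarrow> a = b"
proof (induction a arbitrary: b)
  case Leaf then show ?case by (cases b) auto
next
  case (Node l r)
  then show ?case
  proof (cases b)
    case Leaf then show ?thesis using Node by simp
  next
    case (Node l' r')
    then have "enc l @ False # enc r = enc l' @ False # enc r'" using Node.prems by simp
    then have "enc l = enc l' \<and> enc r = enc r'" by (rule enc_split)
    then show ?thesis using Node Node.IH by blast
  qed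
qed

lemma enc_onto_gen: "walk h w = Some 0 \<Longrightarrow> \<exists>t ts. length ts = h \<and> w = enc t @ concat (map (\<lambda>s. False # enc s) ts)"
proof (induction w arbitrary: h)
  case Nil then show ?case by (intro exI[of _ Leaf] exI[of _ "[]"]) auto
next
  case (Cons x w)
  show ?case
  proof (cases x)
    case True
    then have "walk (Suc h) w = Some 0" using Cons.prems by simp
    then obtain t ts where T: "length ts = Suc h" "w = enc t @ concat (map (\<lambda>s. False # enc s) ts)"
      using Cons.IH by blast
    then obtain s ts' where "ts = s # ts'" by (cases ts) auto
    then show ?thesis using T True
      by (intro exI[of _ "Node t s"] exI[of _ ts']) auto
  next
    case False
    then obtain h' where h: "h = Suc h'" "walk h' w = Some 0" using Cons.prems by (cases h) auto
    then obtain t ts where T: "length ts = h'" "w = enc t @ concat (map (\<lambda>s. False # enc s) ts)"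
      using Cons.IH by blast
    then show ?thesis using False h
      by (intro exI[of _ Leaf] exI[of _ "t # ts"]) auto
  qed
qed

lemma enc_onto: "walk 0 w = Some 0 \<Longrightarrow> \<exists>t. w = enc t"
  using enc_onto_gen[of 0 w] by auto

fun valleys :: "bool list \<Rightarrow> nat" where
  "valleys (False # True # w) = Suc (valleys (True # w))"
| "valleys (x # w) = valleys w"
| "valleys [] = 0"

lemma valleys_True[simp]: "valleys (True # w) = valleys w" by simp

lemma valleys_FC: "valleys (False # y # w) = (if y then 1 else 0) + valleys (y # w)"
  by (cases y) auto

lemma valleys_append: "valleys (xs @ ys) = valleys xs + valleys ys +
   (if xs \<noteq> [] \<and> ys \<noteq> [] \<and> \<not> last xs \<and> hd ys then 1 else 0)"
proof (induction xs)
  case Nil then show ?case by simp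
next
  case (Cons x xs) then show ?case by (cases x; cases xs; cases ys) (auto simp: valleys_FC)
qed

definition ntrue :: "bool list \<Rightarrow> nat" where "ntrue w = length (filter id w)"

lemma RF_False: "right_fathers False t = right_fathers True t + (if t = Leaf then 0 else 1)"
  by (cases t) auto
lemma LF_True: "left_fathers True t = left_fathers False t + (if t = Leaf then 0 else 1)"
  by (cases t) auto

lemma ntrue_enc: "ntrue (enc t) = left_fathers b t + right_fathers b t"
proof (induction t arbitrary: b)
  case Leaf then show ?case by (simp add: ntrue_def)
next
  case (Node l r)
  show ?case using Node.IH(1)[of True] Node.IH(2)[of False] by (simp add: ntrue_def)
qed

lemma valleys_enc: "valleys (enc t) = right_fathers True t"
proof (induction t)
  case Leaf then show ?case by simp
next
  case (Node l r)
  have "valleys (enc (Node l r)) = valleys ((enc l @ [False]) @ enc r)" by simp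
  also have "\<dots> = valleys (enc l) + valleys (enc r) + (if r = Leaf then 0 else 1)"
    by (subst valleys_append, cases r) (auto simp: valleys_append)
  finally show ?case using Node RF_False[of r] by simp
qed



definition blk :: "nat \<times> nat \<Rightarrow> bool list" where
  "blk pq = True # replicate (fst pq) True @ False # replicate (snd pq) False"

definition word_of :: "(nat \<times> nat) list \<Rightarrow> bool list" where
  "word_of bs = concat (map blk bs)"

lemma word_of_Nil[simp]: "word_of [] = []" by (simp add: word_of_def)
lemma word_of_Cons[simp]: "word_of (b # bs) = blk b @ word_of bs" by (simp add: word_of_def)

fun bwalk :: "nat \<Rightarrow> (nat \<times> nat) list \<Rightarrow> nat option" where
  "bwalk h [] = Some h"
| "bwalk h ((p, q) # bs) = (if q \<le> h + p then bwalk (h + p - q) bs else None)"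

lemma walk_repT: "walk h (replicate p True @ w) = walk (h + p) w"
  by (induction p arbitrary: h) auto

lemma walk_repF: "walk h (replicate q False @ w) = (if q \<le> h then walk (h - q) w else None)"
  by (induction q arbitrary: h) auto

lemma walk_word_of: "walk h (word_of bs) = bwalk h bs"
proof (induction bs arbitrary: h)
  case Nil then show ?case by simp
next
  case (Cons b bs)
  obtain p q where b: "b = (p, q)" by fastforce
  show ?case using Cons by (simp add: b blk_def walk_repT walk_repF)
qed

lemma word_of_hd: "bs \<noteq> [] \<Longrightarrow> word_of bs \<noteq> [] \<and> hd (word_of bs)"
  by (cases bs) (auto simp: blk_def)

lemma repT_eq: "replicate p True @ False # x = replicate p' True @ False # y \<Longrightarrow> p = p' \<and> x = y"
proof (induction p arbitrary: p')
  case 0 then show ?case by (cases p') auto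
next
  case (Suc p) then show ?case by (cases p') auto
qed

lemma repF_eq: "(x = [] \<or> hd x) \<Longrightarrow> (y = [] \<or> hd y) \<Longrightarrow>
   replicate q False @ x = replicate q' False @ y \<Longrightarrow> q = q' \<and> x = y"
proof (induction q arbitrary: q')
  case 0 then show ?case by (cases q') auto
next
  case (Suc q) then show ?case by (cases q') auto
qed

lemma word_of_inj: "word_of bs = word_of bs' \<Longrightarrow> bs = bs'"
proof (induction bs arbitrary: bs')
  case Nil then show ?case using word_of_hd[of bs'] by (cases bs') auto
next
  case (Cons b bs)
  then obtain b' bs'' where bs': "bs' = b' # bs''" using word_of_hd[of "b # bs"] by (cases bs') auto
  obtain p q where b: "b = (p, q)" by fastforce
  obtain p' q' where b': "b' = (p', q')" by fastforce
  have E: "replicate p True @ False # (replicate q False @ word_of bs) = replicate p' True @ False # (replicate q' False @ word_of bs'')"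
    using Cons.prems by (simp add: bs' b b' blk_def)
  then have 1: "p = p'" and E2: "replicate q False @ word_of bs = replicate q' False @ word_of bs''"
    using repT_eq by blast+
  have "q = q' \<and> word_of bs = word_of bs''"
    apply (rule repF_eq[OF _ _ E2])
    using word_of_hd[of bs] word_of_hd[of bs''] by (cases "bs = []"; cases "bs'' = []"; simp)+
  then show ?case using Cons.IH 1 by (simp add: bs' b b')
qed

lemma word_of_onto_gen: "w = [] \<or> \<not> last w \<Longrightarrow> \<exists>q bs. w = replicate q False @ word_of bs"
proof (induction w)
  case Nil then show ?case by (intro exI[of _ 0] exI[of _ "[]"]) auto
next
  case (Cons x w)
  show ?case
  proof (cases x)
    case False
    show ?thesis
    proof (cases "w = []")
      case True then show ?thesis using False by (intro exI[of _ 1] exI[of _ "[]"]) auto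
    next
      case nn: False
      then obtain q bs where "w = replicate q False @ word_of bs" using Cons by auto
      then show ?thesis using False by (intro exI[of _ "Suc q"] exI[of _ bs]) auto
    qed
  next
    case True
    then have nn: "w \<noteq> []" using Cons.prems by auto
    then obtain q bs where W: "w = replicate q False @ word_of bs" using Cons by auto
    show ?thesis
    proof (cases q)
      case (Suc q')
      then show ?thesis using W True
        by (intro exI[of _ 0] exI[of _ "(0, q') # bs"]) (auto simp: blk_def)
    next
      case 0
      then have "bs \<noteq> []" using W nn by auto
      then obtain p q1 bs' where "bs = (p, q1) # bs'" by (metis list.exhaust prod.exhaust)
      then show ?thesis using W True 0
        by (intro exI[of _ 0] exI[of _ "(Suc p, q1) # bs'"]) (auto simp: blk_def)
    qed
  qed
qed

lemma ntrue_word_of: "ntrue (word_of bs) = length bs + sum_list (map fst bs)"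
  by (induction bs) (auto simp: ntrue_def blk_def)

lemma valleys_rep: "valleys (replicate n x) = 0"
proof (induction n)
  case 0 then show ?case by simp
next
  case (Suc n) then show ?case by (cases n; cases x) (auto simp: valleys_FC)
qed

lemma valleys_blk: "valleys (blk b) = 0"
proof -
  have "blk b = replicate (Suc (fst b)) True @ replicate (Suc (snd b)) False" by (simp add: blk_def)
  then show ?thesis by (simp only: valleys_append valleys_rep) simp
qed

lemma valleys_word_of: "valleys (word_of bs) = length bs - 1"
proof (induction bs)
  case Nil then show ?case by simp
next
  case (Cons b bs)
  have "valleys (word_of (b # bs)) = valleys (word_of bs) + (if bs = [] then 0 else 1)"
    using word_of_hd[of bs] by (simp add: valleys_append valleys_blk) (simp add: blk_def)
  then show ?case using Cons by (cases bs) auto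
qed



lemma all_le_Suc: "(\<forall>m\<le>Suc n. P m) \<longleftrightarrow> P 0 \<and> (\<forall>m\<le>n. P (Suc m))"
  by (metis Suc_le_mono le_0_eq not0_implies_Suc zero_le)

lemma bwalk_Some: "bwalk h bs = Some h' \<longleftrightarrow>
  (\<forall>m \<le> length bs. sum_list (map snd (take m bs)) \<le> h + sum_list (map fst (take m bs))) \<and>
  h' + sum_list (map snd bs) = h + sum_list (map fst bs)"
proof (induction bs arbitrary: h)
  case Nil then show ?case by auto
next
  case (Cons b bs)
  obtain p q where b: "b = (p, q)" by fastforce
  show ?case
  proof (cases "q \<le> h + p")
    case True
    have e1: "\<And>x y. (y \<le> h + p + x - q) = (q + y \<le> h + (p + x))" using True by arith
    have e2: "\<And>x y. (h' + y = h + p + x - q) = (h' + (q + y) = h + (p + x))" using True by arith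
    show ?thesis using Cons.IH[of "h + p - q"] True
      by (simp add: b all_le_Suc e1 e2)
  next
    case False
    then have "\<not> (\<forall>m \<le> length (b # bs). sum_list (map snd (take m (b # bs))) \<le> h + sum_list (map fst (take m (b # bs))))"
      by (auto simp: b intro!: exI[of _ 1])
    then show ?thesis using False by (simp add: b)
  qed
qed



definition Bset :: "nat \<Rightarrow> nat \<Rightarrow> (nat \<times> nat) list set" where
  "Bset d c = {bs. length bs = Suc d \<and> bwalk 0 bs = Some 0 \<and> sum_list (map fst bs) = c}"

definition mat_of :: "nat \<Rightarrow> (nat \<times> nat) list \<Rightarrow> nat \<Rightarrow> nat \<Rightarrow> nat" where
  "mat_of d bs i j = (if j < d then (if i = 0 then sum_list (map fst (take (d-j) bs))
      else if i = 1 then sum_list (map snd (take (d-j) bs)) else 0) else 0)"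

lemma take_sum_mono: "m \<le> n \<Longrightarrow> sum_list (map (f::_\<Rightarrow>nat) (take m xs)) \<le> sum_list (map f (take n xs))"
proof -
  assume "m \<le> n"
  then have "take n xs = take m xs @ take (n - m) (drop m xs)"
    using take_add[of m "n - m" xs] by simp
  then show ?thesis by simp
qed

lemma take_sum_le: "sum_list (map (f::_\<Rightarrow>nat) (take m xs)) \<le> sum_list (map f xs)"
  using take_sum_mono[of m "max m (length xs)" f xs] by simp

lemma prefix_eq: "length xs = length ys \<Longrightarrow>
  (\<forall>m \<le> length xs. sum_list (take m xs) = sum_list (take m (ys::nat list))) \<Longrightarrow> xs = ys"
proof (rule nth_equalityI)
  fix k assume L: "length xs = length ys" and A: "\<forall>m \<le> length xs. sum_list (take m xs) = sum_list (take m ys)"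
    and k: "k < length xs"
  have "sum_list (take (Suc k) xs) = sum_list (take k xs) + xs ! k"
    using k by (simp add: take_Suc_conv_app_nth)
  moreover have "sum_list (take (Suc k) ys) = sum_list (take k ys) + ys ! k"
    using k L by (simp add: take_Suc_conv_app_nth)
  ultimately show "xs ! k = ys ! k" using A k by (metis Suc_leI add_left_cancel less_imp_le_nat)
qed

lemma Bset_props: "bs \<in> Bset d c \<Longrightarrow>
  (\<forall>m \<le> Suc d. sum_list (map snd (take m bs)) \<le> sum_list (map fst (take m bs))) \<and>
  sum_list (map snd bs) = c \<and> sum_list (map fst bs) = c \<and> length bs = Suc d"
  unfolding Bset_def using bwalk_Some[of 0 bs 0] by auto

lemma mat_in_R: "bs \<in> Bset d c \<Longrightarrow> mat_of d bs \<in> R d c"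
proof -
  assume B: "bs \<in> Bset d c"
  note P = Bset_props[OF B]
  have "two_dim_decomp d 2 c (\<Sum>i<2. \<Sum>j<d. mat_of d bs i j) (mat_of d bs)"
    unfolding two_dim_decomp_def
  proof (intro conjI allI impI)
    fix i j :: nat assume "\<not> (i < 2 \<and> j < d)" then show "mat_of d bs i j = 0" by (auto simp: mat_of_def)
  next
    fix i j :: nat assume "i < 2" "j < d" then show "mat_of d bs i j \<le> c"
      using P take_sum_le[of fst "d-j" bs] take_sum_le[of snd "d-j" bs] by (auto simp: mat_of_def)
  next
    fix i j :: nat assume "i < 2" "Suc j < d" then show "mat_of d bs i (Suc j) \<le> mat_of d bs i j"
      using take_sum_mono[of "d - Suc j" "d - j" fst bs] take_sum_mono[of "d - Suc j" "d - j" snd bs]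
      by (auto simp: mat_of_def)
  next
    fix i j :: nat assume "Suc i < 2" "j < d" then show "mat_of d bs (Suc i) j \<le> mat_of d bs i j"
      using P by (auto simp: mat_of_def)
  qed simp
  then show ?thesis unfolding R_def by blast
qed

lemma mat_inj: "inj_on (mat_of d) (Bset d c)"
proof (rule inj_onI)
  fix bs bs' assume B: "bs \<in> Bset d c" and B': "bs' \<in> Bset d c" and E: "mat_of d bs = mat_of d bs'"
  note P = Bset_props[OF B] and P' = Bset_props[OF B']
  have F: "sum_list (map fst (take m bs)) = sum_list (map fst (take m bs'))
     \<and> sum_list (map snd (take m bs)) = sum_list (map snd (take m bs'))" if m: "m \<le> Suc d" for m
  proof (cases "m = Suc d")
    case True then show ?thesis using P P' by simp
  next
    case False
    show ?thesis
    proof (cases "m = 0")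
      case True then show ?thesis by simp
    next
      case False
      then have "d - m < d" "d - (d - m) = m" using m \<open>m \<noteq> Suc d\<close> by auto
      then show ?thesis using fun_cong[OF fun_cong[OF E, of 0], of "d - m"]
        fun_cong[OF fun_cong[OF E, of 1], of "d - m"] by (simp add: mat_of_def)
    qed
  qed
  have "map fst bs = map fst bs'"
    by (rule prefix_eq) (use F P P' in \<open>auto simp: take_map\<close>)
  moreover have "map snd bs = map snd bs'"
    by (rule prefix_eq) (use F P P' in \<open>auto simp: take_map\<close>)
  ultimately show "bs = bs'" by (simp add: pair_list_eqI)
qed

lemma mono0: "(\<forall>k<m. f k \<le> f (Suc k)) \<Longrightarrow> (f::nat\<Rightarrow>nat) 0 \<le> f m"
  by (induction m) (auto intro: le_trans)

lemma tele: "(\<forall>k<m. f k \<le> f (Suc k)) \<Longrightarrow> sum_list (map (\<lambda>k. f (Suc k) - (f::nat\<Rightarrow>nat) k) [0..<m]) = f m - f 0"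
proof (induction m)
  case 0 then show ?case by simp
next
  case (Suc m)
  have "f 0 \<le> f m" using Suc.prems mono0[of m f] by auto
  then show ?case using Suc by auto
qed

lemma mat_onto: "M \<in> R d c \<Longrightarrow> \<exists>bs \<in> Bset d c. mat_of d bs = M"
proof -
  assume "M \<in> R d c"
  then obtain w where T: "two_dim_decomp d 2 c w M" unfolding R_def by blast
  have Z: "\<And>i j. \<not> (i < 2 \<and> j < d) \<Longrightarrow> M i j = 0"
    and Cb: "\<And>i j. i < 2 \<Longrightarrow> j < d \<Longrightarrow> M i j \<le> c"
    and Rw: "\<And>i j. i < 2 \<Longrightarrow> Suc j < d \<Longrightarrow> M i (Suc j) \<le> M i j"
    and Cl: "\<And>j. j < d \<Longrightarrow> M 1 j \<le> M 0 j"
  proof -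
    have A: "(\<forall>i j. \<not> (i < 2 \<and> j < d) \<longrightarrow> M i j = 0) \<and>
     (\<forall>i<2. \<forall>j<d. M i j \<le> c) \<and>
     (\<forall>i<2. \<forall>j. Suc j < d \<longrightarrow> M i (Suc j) \<le> M i j) \<and>
     (\<forall>i j. Suc i < 2 \<longrightarrow> j < d \<longrightarrow> M (Suc i) j \<le> M i j)"
      using T unfolding two_dim_decomp_def by blast
    show "\<And>i j. \<not> (i < 2 \<and> j < d) \<Longrightarrow> M i j = 0" using A by blast
    show "\<And>i j. i < 2 \<Longrightarrow> j < d \<Longrightarrow> M i j \<le> c" using A by blast
    show "\<And>i j. i < 2 \<Longrightarrow> Suc j < d \<Longrightarrow> M i (Suc j) \<le> M i j" using A by blast
    show "\<And>j. j < d \<Longrightarrow> M 1 j \<le> M 0 j" using A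
      by (metis One_nat_def lessI numeral_2_eq_2)
  qed
  define al where "al m = (if m = 0 then 0 else if m \<le> d then M 0 (d - m) else c)" for m
  define be where "be m = (if m = 0 then 0 else if m \<le> d then M 1 (d - m) else c)" for m
  define g where "g k = (al (Suc k) - al k, be (Suc k) - be k)" for k
  define bs where "bs = map g [0..<Suc d]"
  have monoal: "al k \<le> al (Suc k)" if "k < Suc d" for k
  proof (cases "k = 0")
    case True then show ?thesis by (simp add: al_def)
  next
    case False
    show ?thesis
    proof (cases "Suc k \<le> d")
      case True
      have "M 0 (Suc (d - Suc k)) \<le> M 0 (d - Suc k)" using Rw[of 0 "d - Suc k"] True False by simp
      moreover have "Suc (d - Suc k) = d - k" using True by simp
      ultimately show ?thesis using True False by (simp add: al_def)
    next
      case F2: False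
      then have "k = d" using that by simp
      then show ?thesis using Cb[of 0 0] False by (simp add: al_def)
    qed
  qed
  have monobe: "be k \<le> be (Suc k)" if "k < Suc d" for k
  proof (cases "k = 0")
    case True then show ?thesis by (simp add: be_def)
  next
    case False
    show ?thesis
    proof (cases "Suc k \<le> d")
      case True
      have "M 1 (Suc (d - Suc k)) \<le> M 1 (d - Suc k)" using Rw[of 1 "d - Suc k"] True False by simp
      moreover have "Suc (d - Suc k) = d - k" using True by simp
      ultimately show ?thesis using True False by (simp add: be_def)
    next
      case F2: False
      then have "k = d" using that by simp
      then show ?thesis using Cb[of 1 0] False by (simp add: be_def)
    qed
  qed
  have sf: "sum_list (map fst (take m bs)) = al m" if "m \<le> Suc d" for m
  proof -
    have "take m bs = map g [0..<m]" using that by (simp add: bs_def take_map del: upt_Suc)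
    then have "sum_list (map fst (take m bs)) = sum_list (map (\<lambda>k. al (Suc k) - al k) [0..<m])"
      by (simp add: g_def o_def)
    also have "\<dots> = al m" using tele[of m al] monoal that by (simp add: al_def)
    finally show ?thesis .
  qed
  have ss: "sum_list (map snd (take m bs)) = be m" if "m \<le> Suc d" for m
  proof -
    have "take m bs = map g [0..<m]" using that by (simp add: bs_def take_map del: upt_Suc)
    then have "sum_list (map snd (take m bs)) = sum_list (map (\<lambda>k. be (Suc k) - be k) [0..<m])"
      by (simp add: g_def o_def)
    also have "\<dots> = be m" using tele[of m be] monobe that by (simp add: be_def)
    finally show ?thesis .
  qed
  have len: "length bs = Suc d" by (simp add: bs_def)
  have bale: "be m \<le> al m" if "m \<le> Suc d" for m
    using Cl that unfolding al_def be_def by auto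
  have sumf: "sum_list (map fst bs) = c" using sf[of "Suc d"] len by (simp add: al_def)
  have sums: "sum_list (map snd bs) = c" using ss[of "Suc d"] len by (simp add: be_def)
  have "bwalk 0 bs = Some 0"
    using bwalk_Some[of 0 bs 0] sf ss bale len sumf sums by auto
  then have B: "bs \<in> Bset d c" using len sumf by (simp add: Bset_def)
  have "mat_of d bs = M"
  proof (intro ext)
    fix i j
    show "mat_of d bs i j = M i j"
    proof (cases "j < d \<and> i < 2")
      case True
      then have "d - j \<le> Suc d" "d - j \<noteq> 0" "d - j \<le> d" "d - (d - j) = j" by auto
      then show ?thesis using True sf[of "d - j"] ss[of "d - j"]
        by (cases i) (auto simp: mat_of_def al_def be_def)
    next
      case False then show ?thesis using Z[of i j] by (auto simp: mat_of_def)
    qed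
  qed
  then show ?thesis using B by blast
qed

lemma bij_mat: "bij_betw (mat_of d) (Bset d c) (R d c)"
  unfolding bij_betw_def using mat_inj mat_in_R mat_onto by fast



definition Wset :: "nat \<Rightarrow> nat \<Rightarrow> bool list set" where
  "Wset d c = {w. walk 0 w = Some 0 \<and> ntrue w = c + d + 1 \<and> valleys w = d}"

lemma bij_enc: "bij_betw enc (FBT d (c + 1)) (Wset d c)"
  unfolding bij_betw_def
proof (intro conjI)
  show "inj_on enc (FBT d (c + 1))" by (meson enc_inj inj_onI)
  show "enc ` FBT d (c + 1) = Wset d c"
  proof
    show "enc ` FBT d (c + 1) \<subseteq> Wset d c"
    proof
      fix w assume "w \<in> enc ` FBT d (c + 1)"
      then obtain t where t: "w = enc t" "left_fathers True t = c + 1" "right_fathers True t = d"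
        by (auto simp: FBT_def)
      have "ntrue w = c + d + 1" using t ntrue_enc[of t True] by simp
      moreover have "valleys w = d" using t valleys_enc[of t] by simp
      ultimately show "w \<in> Wset d c" using t walk_enc0[of t] by (simp add: Wset_def)
    qed
  next
    show "Wset d c \<subseteq> enc ` FBT d (c + 1)"
    proof
      fix w assume "w \<in> Wset d c"
      then have W: "walk 0 w = Some 0" "ntrue w = c + d + 1" "valleys w = d" by (auto simp: Wset_def)
      then obtain t where t: "w = enc t" using enc_onto by blast
      have "right_fathers True t = d" using W t valleys_enc by simp
      moreover have "left_fathers True t = c + 1" using W t ntrue_enc[of t True] calculation by simp
      ultimately show "w \<in> enc ` FBT d (c + 1)" using t by (auto simp: FBT_def)
    qed
  qed
qed

lemma last_not_True: "walk h w = Some 0 \<Longrightarrow> w \<noteq> [] \<Longrightarrow> \<not> last w"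
proof
  assume A: "walk h w = Some 0" "w \<noteq> []" "last w"
  then have "w = butlast w @ [True]" by (metis append_butlast_last_id)
  moreover have "walk h (butlast w @ [True]) = (case walk h (butlast w) of None \<Rightarrow> None | Some k \<Rightarrow> Some (Suc k))"
    by (simp add: walk_append split: option.split)
  ultimately have "walk h w = (case walk h (butlast w) of None \<Rightarrow> None | Some k \<Rightarrow> Some (Suc k))"
    by simp
  then show False using A(1) by (cases "walk h (butlast w)") auto
qed

lemma bij_word: "bij_betw word_of (Bset d c) (Wset d c)"
  unfolding bij_betw_def
proof (intro conjI)
  show "inj_on word_of (Bset d c)" by (meson word_of_inj inj_onI)
  show "word_of ` Bset d c = Wset d c"
  proof
    show "word_of ` Bset d c \<subseteq> Wset d c"
    proof
      fix w assume "w \<in> word_of ` Bset d c"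
      then obtain bs where b: "w = word_of bs" "length bs = Suc d" "bwalk 0 bs = Some 0" "sum_list (map fst bs) = c"
        by (auto simp: Bset_def)
      have "ntrue w = c + d + 1" using b ntrue_word_of[of bs] by simp
      moreover have "valleys w = d" using b valleys_word_of[of bs] by simp
      moreover have "walk 0 w = Some 0" using b walk_word_of[of 0 bs] by simp
      ultimately show "w \<in> Wset d c" by (simp add: Wset_def)
    qed
  next
    show "Wset d c \<subseteq> word_of ` Bset d c"
    proof
      fix w assume "w \<in> Wset d c"
      then have W: "walk 0 w = Some 0" "ntrue w = c + d + 1" "valleys w = d" by (auto simp: Wset_def)
      have ne: "w \<noteq> []" using W(2) by (auto simp: ntrue_def)
      then have "\<not> last w" using last_not_True W(1) by blast
      then obtain q bs where wq: "w = replicate q False @ word_of bs" using word_of_onto_gen by blast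
      have "q = 0" using W(1) wq walk_repF[of 0 q "word_of bs"] by (cases q) auto
      then have wb: "w = word_of bs" using wq by simp
      have "bs \<noteq> []" using ne wb by auto
      moreover have "length bs - 1 = d" using W(3) wb valleys_word_of by simp
      ultimately have len: "length bs = Suc d" by (cases bs) auto
      have "sum_list (map fst bs) = c" using W(2) wb ntrue_word_of[of bs] len by simp
      moreover have "bwalk 0 bs = Some 0" using W(1) wb walk_word_of by simp
      ultimately have "bs \<in> Bset d c" using len by (simp add: Bset_def)
      then show "w \<in> word_of ` Bset d c" using wb by blast
    qed
  qed
qed

theorem theorem2p1:
  fixes d c :: nat
  assumes "d \<ge> 1"
  shows "\<exists>f. bij_betw f (R d c) (FBT d (c + 1))"
proof -
  have 1: "bij_betw (inv_into (Bset d c) (mat_of d)) (R d c) (Bset d c)"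
    using bij_betw_inv_into[OF bij_mat] .
  have 2: "bij_betw (inv_into (FBT d (c + 1)) enc) (Wset d c) (FBT d (c + 1))"
    using bij_betw_inv_into[OF bij_enc] .
  show ?thesis using bij_betw_trans[OF bij_betw_trans[OF 1 bij_word] 2] by blast
qed


end
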